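(* Let H be the Hilbert calculus LFI3 extended with the axiom schema (cc) $\circ\circ\alpha$. Then for every set of formulas $\Gamma$ and formula $\alpha$, $\Gamma\vdash_{H}\alpha$ if and only if $\Gamma\vDash_{LFI1}\alpha$; i.e. LFI1 = LFI3 + (cc).
   Context: Formulas are built from a countable set of propositional variables using unary $\neg,\circ$ and binary $\land,\lor,\to$; $\alpha\leftrightarrow\beta:=(\alpha\to\beta)\land(\beta\to\alpha)$, $\sim\alpha:=\neg\alpha\land\circ\alpha$. mbC is the Hilbert calculus with the axiom schemas of a standard axiomatization of positive classical propositional logic in $\land,\lor,\to$, plus $\alpha\lor\neg\alpha$ and $\circ\alpha\to(\alpha\to(\neg\alpha\to\beta))$, with modus ponens as only rule. The Hilbert calculus LFI3 is mbC plus the schemas $\circ\alpha\lor(\alpha\land\neg\alpha)$, $\circ\circ\circ\alpha$, $\neg\neg\alpha\to\alpha$, $\alpha\to\neg\neg\alpha$, $\neg\circ\neg\alpha\leftrightarrow\neg\circ\alpha$, and: A1 $\neg(\alpha\land\beta)\leftrightarrow(\neg\alpha\lor\neg\beta)$; A2 $\neg(\alpha\lor\beta)\leftrightarrow(\neg\alpha\land\neg\beta)$; A3 $\neg(\alpha\to\beta)\leftrightarrow(\neg\beta\land(\sim\neg\alpha\lor\neg\circ\alpha))$; A4 $\neg\circ(\alpha\land\beta)\leftrightarrow(((\sim\neg\alpha\land\neg\circ\beta)\lor(\neg\circ\alpha\land\sim\neg\beta))\lor(\neg\circ\alpha\land\neg\circ\beta))$; A5 $\neg\circ(\alpha\lor\beta)\leftrightarrow(((\sim\alpha\land\neg\circ\beta)\lor(\neg\circ\alpha\land\sim\beta))\lor(\neg\circ\alpha\land\neg\circ\beta))$;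 A6 $\neg\circ(\alpha\to\beta)\leftrightarrow((\sim\neg\alpha\land\neg\circ\beta)\lor(\sim\neg\alpha\land\neg\circ\alpha\land\sim\beta)\lor(\neg\circ\alpha\land\neg\circ\beta)\lor(\sim\alpha\land\neg\circ\alpha\land\sim\beta))$. LFI1 is the three-valued matrix logic on $\{1,\frac12,0\}$ with designated set $\{1,\frac12\}$, $\land=\min$, $\lor=\max$ (order $0<\frac12<1$), $a\to c=1$ if $a=0$ and $a\to c=c$ otherwise, $\neg1=0$, $\neg\frac12=\frac12$, $\neg0=1$, $\circ1=\circ0=1$, $\circ\frac12=0$; $\Gamma\vDash_{LFI1}\alpha$ iff every homomorphic valuation designating all of $\Gamma$ designates $\alpha$. *)

theory Defs
  imports Main
begin

datatype fm =
    Var nat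
  | Neg fm
  | Circ fm
  | Conj fm fm
  | Disj fm fm
  | Imp fm fm

definition Iff :: "fm \<Rightarrow> fm \<Rightarrow> fm" where
  "Iff a b = Conj (Imp a b) (Imp b a)"

definition SNeg :: "fm \<Rightarrow> fm" where
  "SNeg a = Conj (Neg a) (Circ a)"

inductive mbC_ax :: "fm \<Rightarrow> bool" where
  Ax1: "mbC_ax (Imp a (Imp b a))"
| Ax2: "mbC_ax (Imp (Imp a b) (Imp (Imp a (Imp b c)) (Imp a c)))"
| Ax3: "mbC_ax (Imp a (Imp b (Conj a b)))"
| Ax4: "mbC_ax (Imp (Conj a b) a)"
| Ax5: "mbC_ax (Imp (Conj a b) b)"
| Ax6: "mbC_ax (Imp a (Disj a b))"
| Ax7: "mbC_ax (Imp b (Disj a b))"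
| Ax8: "mbC_ax (Imp (Imp a c) (Imp (Imp b c) (Imp (Disj a b) c)))"
| Ax9: "mbC_ax (Disj a (Imp a b))"
| Ax10: "mbC_ax (Disj a (Neg a))"
| bc1: "mbC_ax (Imp (Circ a) (Imp a (Imp (Neg a) b)))"

inductive LFI3_extra :: "fm \<Rightarrow> bool" where
  ci: "LFI3_extra (Disj (Circ a) (Conj a (Neg a)))"
| ccc: "LFI3_extra (Circ (Circ (Circ a)))"
| cf: "LFI3_extra (Imp (Neg (Neg a)) a)"
| ce: "LFI3_extra (Imp a (Neg (Neg a)))"
| cneg: "LFI3_extra (Iff (Neg (Circ (Neg a))) (Neg (Circ a)))"
| A1: "LFI3_extra (Iff (Neg (Conj a b)) (Disj (Neg a) (Neg b)))"
| A2: "LFI3_extra (Iff (Neg (Disj a b)) (Conj (Neg a) (Neg b)))"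
| A3: "LFI3_extra (Iff (Neg (Imp a b))
         (Conj (Neg b) (Disj (SNeg (Neg a)) (Neg (Circ a)))))"
| A4: "LFI3_extra (Iff (Neg (Circ (Conj a b)))
         (Disj (Disj (Conj (SNeg (Neg a)) (Neg (Circ b)))
                     (Conj (Neg (Circ a)) (SNeg (Neg b))))
               (Conj (Neg (Circ a)) (Neg (Circ b)))))"
| A5: "LFI3_extra (Iff (Neg (Circ (Disj a b)))
         (Disj (Disj (Conj (SNeg a) (Neg (Circ b)))
                     (Conj (Neg (Circ a)) (SNeg b)))
               (Conj (Neg (Circ a)) (Neg (Circ b)))))"
| A6: "LFI3_extra (Iff (Neg (Circ (Imp a b)))
         (Disj (Disj (Disj (Conj (SNeg (Neg a)) (Neg (Circ b)))
                           (Conj (Conj (SNeg (Neg a)) (Neg (Circ a))) (SNeg b)))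
                     (Conj (Neg (Circ a)) (Neg (Circ b))))
               (Conj (Conj (SNeg a) (Neg (Circ a))) (SNeg b))))"

inductive H_ax :: "fm \<Rightarrow> bool" where
  mbC: "mbC_ax a \<Longrightarrow> H_ax a"
| lfi3: "LFI3_extra a \<Longrightarrow> H_ax a"
| cc: "H_ax (Circ (Circ a))"

inductive H_derives :: "fm set \<Rightarrow> fm \<Rightarrow> bool" where
  prem: "a \<in> \<Gamma> \<Longrightarrow> H_derives \<Gamma> a"
| ax: "H_ax a \<Longrightarrow> H_derives \<Gamma> a"
| mp: "H_derives \<Gamma> a \<Longrightarrow> H_derives \<Gamma> (Imp a b) \<Longrightarrow> H_derives \<Gamma> b"

datatype tv = Zero | Half | One

fun rk :: "tv \<Rightarrow> nat" where
  "rk Zero = 0" | "rk Half = 1" | "rk One = 2"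

definition tmin :: "tv \<Rightarrow> tv \<Rightarrow> tv" where
  "tmin x y = (if rk x \<le> rk y then x else y)"

definition tmax :: "tv \<Rightarrow> tv \<Rightarrow> tv" where
  "tmax x y = (if rk x \<le> rk y then y else x)"

definition timp :: "tv \<Rightarrow> tv \<Rightarrow> tv" where
  "timp x y = (if x = Zero then One else y)"

fun tneg :: "tv \<Rightarrow> tv" where
  "tneg One = Zero" | "tneg Half = Half" | "tneg Zero = One"

fun tcirc :: "tv \<Rightarrow> tv" where
  "tcirc One = One" | "tcirc Half = Zero" | "tcirc Zero = One"

definition designated :: "tv \<Rightarrow> bool" where
  "designated x \<longleftrightarrow> x = One \<or> x = Half"

fun eval :: "(nat \<Rightarrow> tv) \<Rightarrow> fm \<Rightarrow> tv" where
  "eval v (Var p) = v p"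
| "eval v (Neg a) = tneg (eval v a)"
| "eval v (Circ a) = tcirc (eval v a)"
| "eval v (Conj a b) = tmin (eval v a) (eval v b)"
| "eval v (Disj a b) = tmax (eval v a) (eval v b)"
| "eval v (Imp a b) = timp (eval v a) (eval v b)"

definition LFI1_entails :: "fm set \<Rightarrow> fm \<Rightarrow> bool" where
  "LFI1_entails \<Gamma> a \<longleftrightarrow>
     (\<forall>v. (\<forall>g\<in>\<Gamma>. designated (eval v g)) \<longrightarrow> designated (eval v a))"

end

theory Submission
  imports Defs
begin

section \<open>Soundness\<close>

lemma mbC_valid: "mbC_ax a \<Longrightarrow> designated (eval v a)"
proof (induction rule: mbC_ax.induct)
  case (Ax1 a b) show ?case by (cases "eval v a"; cases "eval v b"; simp add: Iff_def SNeg_def designated_def tmin_def tmax_def timp_def)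
next
  case (Ax2 a b c) show ?case by (cases "eval v a"; cases "eval v b"; cases "eval v c"; simp add: Iff_def SNeg_def designated_def tmin_def tmax_def timp_def)
next
  case (Ax3 a b) show ?case by (cases "eval v a"; cases "eval v b"; simp add: Iff_def SNeg_def designated_def tmin_def tmax_def timp_def)
next
  case (Ax4 a b) show ?case by (cases "eval v a"; cases "eval v b"; simp add: Iff_def SNeg_def designated_def tmin_def tmax_def timp_def)
next
  case (Ax5 a b) show ?case by (cases "eval v a"; cases "eval v b"; simp add: Iff_def SNeg_def designated_def tmin_def tmax_def timp_def)
next
  case (Ax6 a b) show ?case by (cases "eval v a"; cases "eval v b"; simp add: Iff_def SNeg_def designated_def tmin_def tmax_def timp_def)
next
  case (Ax7 a b) show ?case by (cases "eval v a"; cases "eval v b"; simp add: Iff_def SNeg_def designated_def tmin_def tmax_def timp_def)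
next
  case (Ax8 a c b) show ?case by (cases "eval v a"; cases "eval v c"; cases "eval v b"; simp add: Iff_def SNeg_def designated_def tmin_def tmax_def timp_def)
next
  case (Ax9 a b) show ?case by (cases "eval v a"; cases "eval v b"; simp add: Iff_def SNeg_def designated_def tmin_def tmax_def timp_def)
next
  case (Ax10 a) show ?case by (cases "eval v a"; simp add: Iff_def SNeg_def designated_def tmin_def tmax_def timp_def)
next
  case (bc1 a b) show ?case by (cases "eval v a"; cases "eval v b"; simp add: Iff_def SNeg_def designated_def tmin_def tmax_def timp_def)
qed

lemma lfi3_valid: "LFI3_extra a \<Longrightarrow> designated (eval v a)"
proof (induction rule: LFI3_extra.induct)
  case (ci a) show ?case by (cases "eval v a"; simp add: Iff_def SNeg_def designated_def tmin_def tmax_def timp_def)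
next
  case (ccc a) show ?case by (cases "eval v a"; simp add: Iff_def SNeg_def designated_def tmin_def tmax_def timp_def)
next
  case (cf a) show ?case by (cases "eval v a"; simp add: Iff_def SNeg_def designated_def tmin_def tmax_def timp_def)
next
  case (ce a) show ?case by (cases "eval v a"; simp add: Iff_def SNeg_def designated_def tmin_def tmax_def timp_def)
next
  case (cneg a) show ?case by (cases "eval v a"; simp add: Iff_def SNeg_def designated_def tmin_def tmax_def timp_def)
next
  case (A1 a b) show ?case by (cases "eval v a"; cases "eval v b"; simp add: Iff_def SNeg_def designated_def tmin_def tmax_def timp_def)
next
  case (A2 a b) show ?case by (cases "eval v a"; cases "eval v b"; simp add: Iff_def SNeg_def designated_def tmin_def tmax_def timp_def)
next
  case (A3 a b) show ?case by (cases "eval v a"; cases "eval v b"; simp add: Iff_def SNeg_def designated_def tmin_def tmax_def timp_def)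
next
  case (A4 a b) show ?case by (cases "eval v a"; cases "eval v b"; simp add: Iff_def SNeg_def designated_def tmin_def tmax_def timp_def)
next
  case (A5 a b) show ?case by (cases "eval v a"; cases "eval v b"; simp add: Iff_def SNeg_def designated_def tmin_def tmax_def timp_def)
next
  case (A6 a b) show ?case by (cases "eval v a"; cases "eval v b"; simp add: Iff_def SNeg_def designated_def tmin_def tmax_def timp_def)
qed

lemma ax_valid: "H_ax a \<Longrightarrow> designated (eval v a)"
proof (induction rule: H_ax.induct)
  case (mbC a) then show ?case by (rule mbC_valid)
next
  case (lfi3 a) then show ?case by (rule lfi3_valid)
next
  case (cc a)
  then show ?case by (cases "eval v a") (auto simp: designated_def)
qed

lemma soundness: "H_derives \<Gamma> a \<Longrightarrow> LFI1_entails \<Gamma> a"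
  unfolding LFI1_entails_def
proof (induction rule: H_derives.induct)
  case (prem a \<Gamma>) then show ?case by blast
next
  case (ax a \<Gamma>) then show ?case using ax_valid by blast
next
  case (mp \<Gamma> a b)
  show ?case
  proof (intro allI impI)
    fix v assume h: "\<forall>g\<in>\<Gamma>. designated (eval v g)"
    have "designated (eval v a)" "designated (eval v (Imp a b))" using mp.IH h by blast+
    then show "designated (eval v b)"
      by (auto simp: designated_def timp_def split: if_splits)
  qed
qed

section \<open>Completeness\<close>

abbreviation D (infix "\<turnstile>" 50) where "\<Gamma> \<turnstile> a \<equiv> H_derives \<Gamma> a"

lemma axm: "mbC_ax a \<Longrightarrow> \<Gamma> \<turnstile> a" by (intro H_derives.ax H_ax.mbC)
lemma axl: "LFI3_extra a \<Longrightarrow> \<Gamma> \<turnstile> a" by (intro H_derives.ax H_ax.lfi3)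

lemma mp2: "\<Gamma> \<turnstile> Imp a b \<Longrightarrow> \<Gamma> \<turnstile> a \<Longrightarrow> \<Gamma> \<turnstile> b"
  using H_derives.mp by blast

lemma idt: "\<Gamma> \<turnstile> Imp a a"
proof -
  have 1: "\<Gamma> \<turnstile> Imp a (Imp a a)" by (rule axm, rule mbC_ax.Ax1)
  have 2: "\<Gamma> \<turnstile> Imp a (Imp (Imp a a) a)" by (rule axm, rule mbC_ax.Ax1)
  have 3: "\<Gamma> \<turnstile> Imp (Imp a (Imp a a)) (Imp (Imp a (Imp (Imp a a) a)) (Imp a a))"
    by (rule axm, rule mbC_ax.Ax2)
  show ?thesis using mp2[OF mp2[OF 3 1] 2] .
qed

lemma deduction: "insert b \<Gamma> \<turnstile> a \<Longrightarrow> \<Gamma> \<turnstile> Imp b a"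
proof (induction "insert b \<Gamma>" a rule: H_derives.induct)
  case (prem a)
  then show ?case
  proof
    assume "a = b" then show ?thesis using idt by simp
  next
    assume "a \<in> \<Gamma>"
    then have "\<Gamma> \<turnstile> a" by (rule H_derives.prem)
    moreover have "\<Gamma> \<turnstile> Imp a (Imp b a)" by (rule axm, rule mbC_ax.Ax1)
    ultimately show ?thesis using mp2 by blast
  qed
next
  case (ax a)
  then have "\<Gamma> \<turnstile> a" by (rule H_derives.ax)
  moreover have "\<Gamma> \<turnstile> Imp a (Imp b a)" by (rule axm, rule mbC_ax.Ax1)
  ultimately show ?case using mp2 by blast
next
  case (mp a c)
  have "\<Gamma> \<turnstile> Imp (Imp b a) (Imp (Imp b (Imp a c)) (Imp b c))" by (rule axm, rule mbC_ax.Ax2)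
  then show ?case using mp.hyps mp2 by blast
qed

lemma mono: "\<Gamma> \<turnstile> a \<Longrightarrow> \<Gamma> \<subseteq> \<Delta> \<Longrightarrow> \<Delta> \<turnstile> a"
proof (induction rule: H_derives.induct)
  case (prem a \<Gamma>) then show ?case by (blast intro: H_derives.prem)
next
  case (ax a \<Gamma>) then show ?case by (blast intro: H_derives.ax)
next
  case (mp \<Gamma> a b) then show ?case using H_derives.mp by blast
qed

lemma finite_der: "\<Gamma> \<turnstile> a \<Longrightarrow> \<exists>F. finite F \<and> F \<subseteq> \<Gamma> \<and> F \<turnstile> a"
proof (induction rule: H_derives.induct)
  case (prem a \<Gamma>)
  then show ?case by (intro exI[of _ "{a}"]) (auto intro: H_derives.prem)
next
  case (ax a \<Gamma>)
  then show ?case by (intro exI[of _ "{}"]) (auto intro: H_derives.ax)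
next
  case (mp \<Gamma> a b)
  then obtain F1 F2 where "finite F1" "F1 \<subseteq> \<Gamma>" "F1 \<turnstile> a" "finite F2" "F2 \<subseteq> \<Gamma>" "F2 \<turnstile> Imp a b"
    by blast
  then show ?case
  proof (intro exI[of _ "F1 \<union> F2"] conjI)
    have "F1 \<union> F2 \<turnstile> a" using mono[OF \<open>F1 \<turnstile> a\<close>, of "F1 \<union> F2"] by blast
    moreover have "F1 \<union> F2 \<turnstile> Imp a b" using mono[OF \<open>F2 \<turnstile> Imp a b\<close>, of "F1 \<union> F2"] by blast
    ultimately show "F1 \<union> F2 \<turnstile> b" by (rule H_derives.mp)
  qed (use \<open>finite F1\<close> \<open>finite F2\<close> \<open>F1 \<subseteq> \<Gamma>\<close> \<open>F2 \<subseteq> \<Gamma>\<close> in auto)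
qed

lemma chain_fin: "finite F \<Longrightarrow> C \<in> chains A \<Longrightarrow> C \<noteq> {} \<Longrightarrow> F \<subseteq> \<Union>C \<Longrightarrow> \<exists>X\<in>C. F \<subseteq> X"
proof (induction F rule: finite_induct)
  case empty then show ?case by blast
next
  case (insert x F)
  have "F \<subseteq> \<Union>C" using insert.prems(3) by simp
  then obtain X where X: "X \<in> C" "F \<subseteq> X" using insert.IH insert.prems(1,2) by blast
  have "x \<in> \<Union>C" using insert.prems(3) by simp
  then obtain Y where Y: "Y \<in> C" "x \<in> Y" by (rule UnionE)
  have "chain\<^sub>\<subseteq> C" using insert.prems(1) unfolding chains_def by simp
  then have "X \<subseteq> Y \<or> Y \<subseteq> X" using X(1) Y(1) unfolding chain_subset_def by blast
  then show ?case
  proof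
    assume "X \<subseteq> Y" then show ?case using X Y by (intro bexI[of _ Y]) auto
  next
    assume "Y \<subseteq> X" then show ?case using X Y by (intro bexI[of _ X]) auto
  qed
qed

lemma lindenbaum:
  assumes "\<not> \<Gamma> \<turnstile> a"
  shows "\<exists>M. \<Gamma> \<subseteq> M \<and> \<not> M \<turnstile> a \<and> (\<forall>X. M \<subseteq> X \<and> \<not> X \<turnstile> a \<longrightarrow> X = M)"
proof -
  let ?A = "{X. \<Gamma> \<subseteq> X \<and> \<not> X \<turnstile> a}"
  have "\<forall>C\<in>chains ?A. \<exists>U\<in>?A. \<forall>X\<in>C. X \<subseteq> U"
  proof
    fix C assume C: "C \<in> chains ?A"
    show "\<exists>U\<in>?A. \<forall>X\<in>C. X \<subseteq> U"
    proof (cases "C = {}")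
      case True
      have "\<Gamma> \<in> ?A" using assms by simp
      then show ?thesis using True by blast
    next
      case False
      have sub: "C \<subseteq> ?A" using C unfolding chains_def by simp
      have "\<not> \<Union>C \<turnstile> a"
      proof
        assume "\<Union>C \<turnstile> a"
        then obtain F where "finite F" "F \<subseteq> \<Union>C" "F \<turnstile> a" using finite_der by blast
        then obtain X where "X \<in> C" "F \<subseteq> X" using chain_fin C False by blast
        then have "X \<turnstile> a" using mono \<open>F \<turnstile> a\<close> by blast
        moreover have "X \<in> ?A" using sub \<open>X \<in> C\<close> by (rule subsetD)
        ultimately show False by simp
      qed
      moreover have "\<Gamma> \<subseteq> \<Union>C"
      proof -
        obtain X where "X \<in> C" using False by blast
        then have "X \<in> ?A" using sub by (rule rev_subsetD)
        then show ?thesis using \<open>X \<in> C\<close> by auto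
      qed
      ultimately have "\<Union>C \<in> ?A" by simp
      then show ?thesis by (intro bexI[of _ "\<Union>C"]) auto
    qed
  qed
  from Zorn_Lemma2[OF this] obtain M where "M \<in> ?A" "\<forall>X\<in>?A. M \<subseteq> X \<longrightarrow> X = M" by blast
  then show ?thesis by (intro exI[of _ M]) auto
qed

locale maxset =
  fixes M :: "fm set" and a :: fm
  assumes nd: "\<not> M \<turnstile> a"
    and mx: "\<And>X. M \<subseteq> X \<Longrightarrow> \<not> X \<turnstile> a \<Longrightarrow> X = M"
begin

lemma closed: "M \<turnstile> b \<Longrightarrow> b \<in> M"
proof (rule ccontr)
  assume b: "M \<turnstile> b" "b \<notin> M"
  then have "insert b M \<noteq> M" by blast
  then have "insert b M \<turnstile> a" using mx[of "insert b M"] by blast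
  then have "M \<turnstile> Imp b a" by (rule deduction)
  then have "M \<turnstile> a" using b(1) by (rule mp2)
  then show False using nd by blast
qed

lemma mem: "b \<in> M \<longleftrightarrow> M \<turnstile> b" using closed H_derives.prem by blast

lemma notin: "b \<notin> M \<Longrightarrow> Imp b a \<in> M"
proof -
  assume "b \<notin> M"
  then have "insert b M \<noteq> M" by blast
  then have "insert b M \<turnstile> a" using mx by blast
  then show ?thesis using deduction mem by blast
qed

lemma a_notin: "a \<notin> M" using nd mem by blast

lemma mpM: "Imp b c \<in> M \<Longrightarrow> b \<in> M \<Longrightarrow> c \<in> M" using mem mp2 by blast
lemma axM: "mbC_ax b \<Longrightarrow> b \<in> M" using mem axm by blast
lemma axL: "LFI3_extra b \<Longrightarrow> b \<in> M" using mem axl by blast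
lemma axC: "Circ (Circ b) \<in> M" using mem H_derives.ax H_ax.cc by blast

lemma conjM: "Conj b c \<in> M \<longleftrightarrow> b \<in> M \<and> c \<in> M"
  using mpM[OF axM[OF mbC_ax.Ax4]] mpM[OF axM[OF mbC_ax.Ax5]]
    mpM[OF mpM[OF axM[OF mbC_ax.Ax3]]] by blast

lemma disjM: "Disj b c \<in> M \<longleftrightarrow> b \<in> M \<or> c \<in> M"
proof
  assume d: "Disj b c \<in> M"
  show "b \<in> M \<or> c \<in> M"
  proof (rule ccontr)
    assume "\<not> (b \<in> M \<or> c \<in> M)"
    then have "Imp b a \<in> M" "Imp c a \<in> M" using notin by auto
    then have "a \<in> M" using mpM[OF mpM[OF mpM[OF axM[OF mbC_ax.Ax8]]]] d by blast
    then show False using a_notin by blast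
  qed
next
  assume "b \<in> M \<or> c \<in> M"
  then show "Disj b c \<in> M" using mpM[OF axM[OF mbC_ax.Ax6]] mpM[OF axM[OF mbC_ax.Ax7]] by blast
qed

lemma impM: "Imp b c \<in> M \<longleftrightarrow> b \<notin> M \<or> c \<in> M"
proof
  assume "Imp b c \<in> M" then show "b \<notin> M \<or> c \<in> M" using mpM by blast
next
  assume h: "b \<notin> M \<or> c \<in> M"
  have "Disj b (Imp b c) \<in> M" by (rule axM, rule mbC_ax.Ax9)
  then show "Imp b c \<in> M" using h disjM mpM[OF axM[OF mbC_ax.Ax1]] by blast
qed

lemma iffM: "Iff b c \<in> M \<Longrightarrow> b \<in> M \<longleftrightarrow> c \<in> M"
  unfolding Iff_def using conjM impM by blast

lemma negM: "b \<in> M \<or> Neg b \<in> M" using disjM axM[OF mbC_ax.Ax10] by blast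

lemma explode: "Circ b \<in> M \<Longrightarrow> b \<in> M \<Longrightarrow> Neg b \<in> M \<Longrightarrow> False"
  using mpM[OF mpM[OF mpM[OF axM[OF mbC_ax.bc1]]]] a_notin by blast

lemma circM: "Circ b \<in> M \<longleftrightarrow> \<not> (b \<in> M \<and> Neg b \<in> M)"
  using explode axL[OF LFI3_extra.ci] disjM conjM by blast

lemma negneg: "Neg (Neg b) \<in> M \<longleftrightarrow> b \<in> M"
  using mpM[OF axL[OF LFI3_extra.cf]] mpM[OF axL[OF LFI3_extra.ce]] by blast

lemma negcirc: "Neg (Circ b) \<in> M \<longleftrightarrow> b \<in> M \<and> Neg b \<in> M"
  using circM[of "Circ b"] circM[of b] axC[of b] negM[of "Circ b"] by blast

definition f :: "fm \<Rightarrow> tv" where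
  "f b = (if b \<notin> M then Zero else if Neg b \<in> M then Half else One)"

definition val :: "nat \<Rightarrow> tv" where "val p = f (Var p)"

lemma truth: "eval val b = f b"
proof (induction b)
  case (Var p) then show ?case by (simp add: val_def)
next
  case (Neg b)
  have e: "eval val (Neg b) = tneg (f b)" using Neg.IH by simp
  show ?case unfolding e
    using negneg[of b] negM[of b] by (cases "b \<in> M"; cases "Neg b \<in> M"; simp add: f_def)
next
  case (Circ b)
  have e: "eval val (Circ b) = tcirc (f b)" using Circ.IH by simp
  show ?case unfolding e
    using circM[of b] negcirc[of b] by (cases "b \<in> M"; cases "Neg b \<in> M"; simp add: f_def)
next
  case (Conj b c)
  have e: "eval val (Conj b c) = tmin (f b) (f c)" using Conj.IH by simp
  have n: "Neg (Conj b c) \<in> M \<longleftrightarrow> Neg b \<in> M \<or> Neg c \<in> M"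
    using iffM[OF axL[OF LFI3_extra.A1]] disjM by blast
  show ?case unfolding e using n conjM[of b c]
    by (cases "b \<in> M"; cases "Neg b \<in> M"; cases "c \<in> M"; cases "Neg c \<in> M"; simp add: f_def tmin_def)
next
  case (Disj b c)
  have e: "eval val (Disj b c) = tmax (f b) (f c)" using Disj.IH by simp
  have n: "Neg (Disj b c) \<in> M \<longleftrightarrow> Neg b \<in> M \<and> Neg c \<in> M"
    using iffM[OF axL[OF LFI3_extra.A2]] conjM by blast
  show ?case unfolding e using n disjM[of b c] negM[of b] negM[of c]
    by (cases "b \<in> M"; cases "Neg b \<in> M"; cases "c \<in> M"; cases "Neg c \<in> M"; simp add: f_def tmax_def)
next
  case (Imp b c)
  have e: "eval val (Imp b c) = timp (f b) (f c)" using Imp.IH by simp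
  have n: "Neg (Imp b c) \<in> M \<longleftrightarrow> Neg c \<in> M \<and>
     ((Neg (Neg b) \<in> M \<and> Circ (Neg b) \<in> M) \<or> Neg (Circ b) \<in> M)"
  proof -
    have "Neg (Imp b c) \<in> M \<longleftrightarrow> Conj (Neg c) (Disj (SNeg (Neg b)) (Neg (Circ b))) \<in> M"
      by (rule iffM[OF axL[OF LFI3_extra.A3]])
    also have "\<dots> \<longleftrightarrow> Neg c \<in> M \<and> (SNeg (Neg b) \<in> M \<or> Neg (Circ b) \<in> M)"
      by (simp add: conjM disjM)
    finally show ?thesis by (simp add: SNeg_def conjM)
  qed
  show ?case unfolding e
  proof (cases "b \<in> M")
    case False
    then have "Neg (Neg b) \<notin> M" "Neg (Circ b) \<notin> M" using negneg[of b] negcirc[of b] by simp_all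
    then have "Neg (Imp b c) \<notin> M" using n by simp
    moreover have "Imp b c \<in> M" using False impM[of b c] by simp
    ultimately show "timp (f b) (f c) = f (Imp b c)" using False by (simp add: f_def timp_def)
  next
    case True
    have "Neg (Imp b c) \<in> M \<longleftrightarrow> Neg c \<in> M"
    proof (cases "Neg b \<in> M")
      case True2: True
      then have "Neg (Circ b) \<in> M" using True negcirc[of b] by simp
      then show ?thesis using n by simp
    next
      case False2: False
      then have "Neg (Neg b) \<in> M" "Circ (Neg b) \<in> M" using True negneg[of b] circM[of "Neg b"] by simp_all
      then show ?thesis using n by simp
    qed
    moreover have "Imp b c \<in> M \<longleftrightarrow> c \<in> M" using True impM[of b c] by simp
    ultimately show "timp (f b) (f c) = f (Imp b c)" using True by (simp add: f_def timp_def)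
  qed
qed

end

lemma completeness: "LFI1_entails \<Gamma> a \<Longrightarrow> \<Gamma> \<turnstile> a"
proof (rule ccontr)
  assume e: "LFI1_entails \<Gamma> a" and n: "\<not> \<Gamma> \<turnstile> a"
  obtain M where M: "\<Gamma> \<subseteq> M" "\<not> M \<turnstile> a" "\<forall>X. M \<subseteq> X \<and> \<not> X \<turnstile> a \<longrightarrow> X = M"
    using lindenbaum[OF n] by blast
  interpret maxset M a using M by unfold_locales blast+
  have "\<forall>g\<in>\<Gamma>. designated (eval val g)"
    using M(1) truth by (auto simp: f_def designated_def)
  then have "designated (eval val a)" using e unfolding LFI1_entails_def by blast
  then show False using truth a_notin by (auto simp: f_def designated_def)
qed

theorem corollary1:
  fixes \<Gamma> :: "fm set" and \<alpha> :: fm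
  shows "H_derives \<Gamma> \<alpha> \<longleftrightarrow> LFI1_entails \<Gamma> \<alpha>"
  using soundness completeness by blast

end
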